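(* Let $(A,\cdot,[-,-],\varepsilon)$ be a Leibniz-Poisson color algebra. Then $(A,\cdot,\{-,-,-\},\varepsilon)$ is a ternary Leibniz-Poisson color algebra, where $\{x,y,z\}:=[x,y\cdot z]$ for all $x,y,z\in\mathcal{H}(A)$.
   Context: $G$ is an abelian group, $\mathbb{K}$ a field of characteristic $\neq 2$, $\mathcal{H}(V)$ the homogeneous elements of a $G$-graded space $V$; even maps preserve degree. A skew-symmetric bicharacter $\varepsilon:G\times G\to\mathbb{K}^*$ satisfies $\varepsilon(a,b)\varepsilon(b,a)=1$, $\varepsilon(a,b+c)=\varepsilon(a,b)\varepsilon(a,c)$, $\varepsilon(a+b,c)=\varepsilon(a,c)\varepsilon(b,c)$; $\varepsilon(x,y)$ means $\varepsilon$ of the degrees. A Leibniz-Poisson color algebra $(P,\cdot,[-,-],\varepsilon)$ is a $G$-graded space with even bilinear maps $\cdot$ and $[-,-]$ such that $(P,\cdot)$ is associative, $[[x,y],z]=[x,[y,z]]+\varepsilon(y,z)[[x,z],y]$, and $[x\cdot y,z]=x\cdot[y,z]+\varepsilon(y,z)[x,z]\cdot y$ for all homogeneous $x,y,z$. A ternary Leibniz-Poisson color algebra $(A,\cdot,[-,-,-],\varepsilon)$ is a $G$-graded space with an even associative product $\cdot$ and an even trilinear $[-,-,-]$ such that $[[x,y,z],t,u]=[x,y,[z,t,u]]+\varepsilon(z,t+u)[x,[y,t,u],z]+\varepsilon(y+z,t+u)[[x,t,u],y,z]$ and $[x\cdot y,z,t]=x\cdot[y,z,t]+\varepsilon(y,z+t)[x,z,t]\cdot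 y$ for all homogeneous $x,y,z,t,u$. *)

theory Defs
  imports Complex_Main
begin

text \<open>A G-graded vector space over the field 'k: the carrier is the type 'v with scalar
multiplication sc, and Vg g is the homogeneous component of degree g.\<close>

definition graded_space ::
  "('k::field \<Rightarrow> 'v::ab_group_add \<Rightarrow> 'v) \<Rightarrow> ('g::ab_group_add \<Rightarrow> 'v set) \<Rightarrow> bool" where
  "graded_space sc Vg \<longleftrightarrow>
     vector_space sc \<and>
     (\<forall>g. 0 \<in> Vg g \<and> (\<forall>x\<in>Vg g. \<forall>y\<in>Vg g. x + y \<in> Vg g) \<and> (\<forall>c. \<forall>x\<in>Vg g. sc c x \<in> Vg g)) \<and>
     (\<forall>v. \<exists>!f. finite {g. f g \<noteq> 0} \<and> (\<forall>g. f g \<in> Vg g) \<and> v = sum f {g. f g \<noteq> 0})"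

definition skew_bichar :: "('g::ab_group_add \<Rightarrow> 'g \<Rightarrow> 'k::field) \<Rightarrow> bool" where
  "skew_bichar eps \<longleftrightarrow>
     (\<forall>a b. eps a b \<noteq> 0) \<and>
     (\<forall>a b. eps a b * eps b a = 1) \<and>
     (\<forall>a b c. eps a (b + c) = eps a b * eps a c) \<and>
     (\<forall>a b c. eps (a + b) c = eps a c * eps b c)"

definition bilin :: "('k::field \<Rightarrow> 'v::ab_group_add \<Rightarrow> 'v) \<Rightarrow> ('v \<Rightarrow> 'v \<Rightarrow> 'v) \<Rightarrow> bool" where
  "bilin sc m \<longleftrightarrow>
     (\<forall>x. Vector_Spaces.linear sc sc (m x)) \<and> (\<forall>y. Vector_Spaces.linear sc sc (\<lambda>x. m x y))"

definition trilin ::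
  "('k::field \<Rightarrow> 'v::ab_group_add \<Rightarrow> 'v) \<Rightarrow> ('v \<Rightarrow> 'v \<Rightarrow> 'v \<Rightarrow> 'v) \<Rightarrow> bool" where
  "trilin sc t \<longleftrightarrow>
     (\<forall>y z. Vector_Spaces.linear sc sc (\<lambda>x. t x y z)) \<and>
     (\<forall>x z. Vector_Spaces.linear sc sc (\<lambda>y. t x y z)) \<and>
     (\<forall>x y. Vector_Spaces.linear sc sc (\<lambda>z. t x y z))"

definition even2 :: "('g::ab_group_add \<Rightarrow> 'v set) \<Rightarrow> ('v \<Rightarrow> 'v \<Rightarrow> 'v) \<Rightarrow> bool" where
  "even2 Vg m \<longleftrightarrow> (\<forall>a b x y. x \<in> Vg a \<longrightarrow> y \<in> Vg b \<longrightarrow> m x y \<in> Vg (a + b))"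

definition even3 :: "('g::ab_group_add \<Rightarrow> 'v set) \<Rightarrow> ('v \<Rightarrow> 'v \<Rightarrow> 'v \<Rightarrow> 'v) \<Rightarrow> bool" where
  "even3 Vg t \<longleftrightarrow>
     (\<forall>a b c x y z. x \<in> Vg a \<longrightarrow> y \<in> Vg b \<longrightarrow> z \<in> Vg c \<longrightarrow> t x y z \<in> Vg (a + b + c))"

definition LP_color_algebra ::
  "('k::field \<Rightarrow> 'v::ab_group_add \<Rightarrow> 'v) \<Rightarrow> ('g::ab_group_add \<Rightarrow> 'v set) \<Rightarrow>
   ('v \<Rightarrow> 'v \<Rightarrow> 'v) \<Rightarrow> ('v \<Rightarrow> 'v \<Rightarrow> 'v) \<Rightarrow> ('g \<Rightarrow> 'g \<Rightarrow> 'k) \<Rightarrow> bool" where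
  "LP_color_algebra sc Vg mul br eps \<longleftrightarrow>
     graded_space sc Vg \<and> skew_bichar eps \<and>
     bilin sc mul \<and> even2 Vg mul \<and> bilin sc br \<and> even2 Vg br \<and>
     (\<forall>a b c x y z. x \<in> Vg a \<longrightarrow> y \<in> Vg b \<longrightarrow> z \<in> Vg c \<longrightarrow>
        mul (mul x y) z = mul x (mul y z) \<and>
        br (br x y) z = br x (br y z) + sc (eps b c) (br (br x z) y) \<and>
        br (mul x y) z = mul x (br y z) + sc (eps b c) (mul (br x z) y))"

definition ternary_LP_color_algebra ::
  "('k::field \<Rightarrow> 'v::ab_group_add \<Rightarrow> 'v) \<Rightarrow> ('g::ab_group_add \<Rightarrow> 'v set) \<Rightarrow>
   ('v \<Rightarrow> 'v \<Rightarrow> 'v) \<Rightarrow> ('v \<Rightarrow> 'v \<Rightarrow> 'v \<Rightarrow> 'v) \<Rightarrow> ('g \<Rightarrow> 'g \<Rightarrow> 'k) \<Rightarrow> bool" where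
  "ternary_LP_color_algebra sc Vg mul tb eps \<longleftrightarrow>
     graded_space sc Vg \<and> skew_bichar eps \<and>
     bilin sc mul \<and> even2 Vg mul \<and> trilin sc tb \<and> even3 Vg tb \<and>
     (\<forall>a b c x y z. x \<in> Vg a \<longrightarrow> y \<in> Vg b \<longrightarrow> z \<in> Vg c \<longrightarrow>
        mul (mul x y) z = mul x (mul y z)) \<and>
     (\<forall>a b c d e x y z t u. x \<in> Vg a \<longrightarrow> y \<in> Vg b \<longrightarrow> z \<in> Vg c \<longrightarrow> t \<in> Vg d \<longrightarrow> u \<in> Vg e \<longrightarrow>
        tb (tb x y z) t u = tb x y (tb z t u) + sc (eps c (d + e)) (tb x (tb y t u) z)
                            + sc (eps (b + c) (d + e)) (tb (tb x t u) y z)) \<and>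
     (\<forall>a b c d x y z t. x \<in> Vg a \<longrightarrow> y \<in> Vg b \<longrightarrow> z \<in> Vg c \<longrightarrow> t \<in> Vg d \<longrightarrow>
        tb (mul x y) z t = mul x (tb y z t) + sc (eps b (c + d)) (mul (tb x z t) y))"

end

theory Submission
  imports Defs
begin

theorem mainTheorem18:
  fixes sc :: "'k::field \<Rightarrow> 'v::ab_group_add \<Rightarrow> 'v"
    and Vg :: "'g::ab_group_add \<Rightarrow> 'v set"
    and mul br :: "'v \<Rightarrow> 'v \<Rightarrow> 'v"
    and eps :: "'g \<Rightarrow> 'g \<Rightarrow> 'k"
  assumes "(2::'k) \<noteq> 0"
    and "LP_color_algebra sc Vg mul br eps"
  shows "ternary_LP_color_algebra sc Vg mul (\<lambda>x y z. br x (mul y z)) eps"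
proof -
  note A = assms(2)[unfolded LP_color_algebra_def]
  have bm: "bilin sc mul" and bb: "bilin sc br" and em: "even2 Vg mul" and eb: "even2 Vg br"
    using A by auto
  have ax: "\<And>a b c x y z. x \<in> Vg a \<Longrightarrow> y \<in> Vg b \<Longrightarrow> z \<in> Vg c \<Longrightarrow>
        mul (mul x y) z = mul x (mul y z) \<and>
        br (br x y) z = br x (br y z) + sc (eps b c) (br (br x z) y) \<and>
        br (mul x y) z = mul x (br y z) + sc (eps b c) (mul (br x z) y)"
    using A by blast
  have brlin: "\<And>x. Vector_Spaces.linear sc sc (br x)" using bb unfolding bilin_def by auto
  have brlin2: "\<And>y. Vector_Spaces.linear sc sc (\<lambda>x. br x y)" using bb unfolding bilin_def by auto
  have mlin: "\<And>x. Vector_Spaces.linear sc sc (mul x)" using bm unfolding bilin_def by auto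
  have mlin2: "\<And>y. Vector_Spaces.linear sc sc (\<lambda>x. mul x y)" using bm unfolding bilin_def by auto
  have bradd: "\<And>x p q. br x (p + q) = br x p + br x q"
    using brlin unfolding Vector_Spaces.linear_iff by blast
  have brsc: "\<And>x k q. br x (sc k q) = sc k (br x q)"
    using brlin unfolding Vector_Spaces.linear_iff by blast
  have tri: "trilin sc (\<lambda>x y z. br x (mul y z))"
    unfolding trilin_def
  proof (intro conjI allI)
    fix y z show "Vector_Spaces.linear sc sc (\<lambda>x. br x (mul y z))" using brlin2 .
  next
    fix x z show "Vector_Spaces.linear sc sc (\<lambda>y. br x (mul y z))"
      using Vector_Spaces.linear_compose[OF mlin2[of z] brlin[of x]] by (simp add: o_def)
  next
    fix x y show "Vector_Spaces.linear sc sc (\<lambda>z. br x (mul y z))"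
      using Vector_Spaces.linear_compose[OF mlin[of y] brlin[of x]] by (simp add: o_def)
  qed
  have ev3: "even3 Vg (\<lambda>x y z. br x (mul y z))"
    unfolding even3_def using em eb unfolding even2_def by (metis add.assoc)
  have J: "br (br x (mul y z)) (mul t u) = br x (mul y (br z (mul t u)))
            + sc (eps c (d + e)) (br x (mul (br y (mul t u)) z))
            + sc (eps (b + c) (d + e)) (br (br x (mul t u)) (mul y z))"
    if h: "x \<in> Vg a" "y \<in> Vg b" "z \<in> Vg c" "t \<in> Vg d" "u \<in> Vg e" for a b c d e x y z t u
  proof -
    have w: "mul t u \<in> Vg (d + e)" using em h unfolding even2_def by blast
    have yz: "mul y z \<in> Vg (b + c)" using em h unfolding even2_def by blast
    have 1: "br (br x (mul y z)) (mul t u) = br x (br (mul y z) (mul t u))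
         + sc (eps (b + c) (d + e)) (br (br x (mul t u)) (mul y z))"
      using ax[OF h(1) yz w] by blast
    have 2: "br (mul y z) (mul t u) = mul y (br z (mul t u)) + sc (eps c (d + e)) (mul (br y (mul t u)) z)"
      using ax[OF h(2) h(3) w] by blast
    show ?thesis unfolding 1 2 bradd brsc by simp
  qed
  have P: "br (mul x y) (mul z t) = mul x (br y (mul z t)) + sc (eps b (c + d)) (mul (br x (mul z t)) y)"
    if h: "x \<in> Vg a" "y \<in> Vg b" "z \<in> Vg c" "t \<in> Vg d" for a b c d x y z t
  proof -
    have w: "mul z t \<in> Vg (c + d)" using em h unfolding even2_def by blast
    show ?thesis using ax[OF h(1) h(2) w] by blast
  qed
  have G: "graded_space sc Vg" "skew_bichar eps" using A by auto
  have AS: "\<forall>a b c x y z. x \<in> Vg a \<longrightarrow> y \<in> Vg b \<longrightarrow> z \<in> Vg c \<longrightarrow>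
        mul (mul x y) z = mul x (mul y z)" using ax by blast
  show ?thesis unfolding ternary_LP_color_algebra_def
    apply (intro conjI G bm em tri ev3 AS)
    subgoal using J by blast
    subgoal using P by blast
    done
qed

end
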